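(* Let $A\subset\mathbb{R}$ be a finite set. Then there exists a subset $A'\subseteq A$ with $|A'|\geq |A|/2$ such that for all $a\in A'$, $$|A(A+a)|\gg |A|^{3/2},$$ where $A(A+a)=\{b(c+a): b,c\in A\}$.
   Context: $X\gg Y$ means $X\geq cY$ for some absolute constant $c>0$ (independent of $A$ and $a$). *)

theory Defs
  imports Complex_Main
begin

definition shift_prod_set :: "real set \<Rightarrow> real \<Rightarrow> real set" where
  "shift_prod_set A a = {b * (c + a) | b c. b \<in> A \<and> c \<in> A}"

end

theory Submission
  imports Defs "HOL-Analysis.Analysis"
begin
(* main proof via a two-layer crossing count *)

lemma pairs_cs:
  fixes I :: "'a set" and d :: "'a \<Rightarrow> nat"
  assumes fin: "finite I" and bd: "\<forall>i\<in>I. d i < Q"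
  shows "real (card I)^2 \<le> real Q * real (card {p\<in>I\<times>I. d (fst p) = d (snd p)})"
proof -
  define W where "W q = {i\<in>I. d i = q}" for q
  have fW: "finite (W q)" for q using fin by (simp add: W_def)
  have I_eq: "I = (\<Union>q\<in>{..<Q}. W q)" using bd by (auto simp: W_def)
  have cI: "card I = (\<Sum>q<Q. card (W q))"
    unfolding I_eq by (rule card_UN_disjoint) (auto simp: fin W_def)
  have P_eq: "{p\<in>I\<times>I. d (fst p) = d (snd p)} = (\<Union>q\<in>{..<Q}. W q \<times> W q)"
    using bd by (auto simp: W_def)
  have cP: "card {p\<in>I\<times>I. d (fst p) = d (snd p)} = (\<Sum>q<Q. card (W q) * card (W q))"
    unfolding P_eq by (subst card_UN_disjoint) (auto simp: fin W_def card_cartesian_product)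
  have "real (card I)^2 = (\<Sum>q<Q. 1 * real (card (W q)))^2" by (simp add: cI)
  also have "\<dots> \<le> (\<Sum>q<Q. 1^2) * (\<Sum>q<Q. (real (card (W q)))^2)"
    by (rule Cauchy_Schwarz_ineq_sum)
  also have "\<dots> = real Q * real (card {p\<in>I\<times>I. d (fst p) = d (snd p)})"
    by (simp add: cP power2_eq_square)
  finally show ?thesis .
qed

definition lin :: "real \<times> real \<Rightarrow> real \<Rightarrow> real" where
  "lin l x = fst l * (x + snd l)"

definition rk :: "real set \<Rightarrow> real \<Rightarrow> nat" where
  "rk P y = card {z\<in>P. z < y}"

definition Xs :: "(real \<times> real) set \<Rightarrow> real \<Rightarrow> real \<Rightarrow> ((real \<times> real) \<times> (real \<times> real)) set" where
  "Xs L a a2 = {p\<in>L\<times>L. lin (fst p) a < lin (snd p) a \<and> lin (snd p) a2 < lin (fst p) a2}"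

lemma rk_strict:
  assumes "finite P" "y \<in> P" "y < y'"
  shows "rk P y < rk P y'"
  unfolding rk_def
proof (rule psubset_card_mono)
  show "finite {z \<in> P. z < y'}" using assms by simp
  show "{z \<in> P. z < y} \<subset> {z \<in> P. z < y'}" using assms by auto
qed

lemma rk_mono:
  assumes "finite P" "y \<le> y'"
  shows "rk P y \<le> rk P y'"
  unfolding rk_def by (rule card_mono) (use assms in auto)

lemma rk_less_imp:
  assumes "finite P" "rk P y < rk P y'"
  shows "y < y'"
  using rk_mono[OF assms(1), of y' y] assms(2) by (cases "y < y'") auto

lemma rk_lt_card:
  assumes "finite P" "y \<in> P"
  shows "rk P y < card P"
  unfolding rk_def by (rule psubset_card_mono) (use assms in auto)

lemma rk_inj: "finite P \<Longrightarrow> inj_on (rk P) P"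
  unfolding inj_on_def
  by (metis linorder_neqE_linordered_idom nat_less_le rk_strict)

lemma block_card:
  assumes "finite P" "\<beta> > 0"
  shows "card {y\<in>P. rk P y div \<beta> = u} \<le> \<beta>"
proof -
  have "card {y\<in>P. rk P y div \<beta> = u} \<le> card {u*\<beta>..<u*\<beta>+\<beta>}"
  proof (rule card_inj_on_le[where f="rk P"])
    show "inj_on (rk P) {y \<in> P. rk P y div \<beta> = u}"
      using rk_inj[OF assms(1)] by (rule inj_on_subset) auto
    show "rk P ` {y \<in> P. rk P y div \<beta> = u} \<subseteq> {u * \<beta>..<u * \<beta> + \<beta>}"
    proof
      fix r assume "r \<in> rk P ` {y \<in> P. rk P y div \<beta> = u}"
      then have "r div \<beta> = u" by auto
      then show "r \<in> {u * \<beta>..<u * \<beta> + \<beta>}" using assms(2)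
        by (metis atLeastLessThan_iff div_times_less_eq_dividend dividend_less_times_div
            mult.commute add.commute)
    qed
  qed auto
  then show ?thesis by simp
qed

lemma lin_inj:
  assumes "a \<noteq> a2" "fst l \<noteq> 0" "lin l a = lin l' a" "lin l a2 = lin l' a2"
  shows "l = l'"
proof -
  obtain b c where l: "l = (b,c)" by force
  obtain b' c' where l': "l' = (b',c')" by force
  have e1: "b*(a+c) = b'*(a+c')" and e2: "b*(a2+c) = b'*(a2+c')"
    using assms by (auto simp: lin_def l l')
  have "b*(a-a2) = b'*(a-a2)" using e1 e2 by (simp add: algebra_simps)
  then have bb: "b = b'" using assms(1) by simp
  then have "b*c = b*c'" using e1 by (simp add: algebra_simps)
  then have "c = c'" using assms(2) l by simp
  then show ?thesis using bb l l' by simp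
qed

lemma no_two:
  assumes "x1 < x2" "x2 \<le> x3" "lin l x1 < lin l' x1" "lin l' x2 < lin l x2" "lin l x3 < lin l' x3"
  shows False
proof -
  define g where "g x = lin l' x - lin l x" for x
  have gd: "g y - g x = (fst l' - fst l) * (y - x)" for x y
    by (simp add: g_def lin_def algebra_simps)
  have "g x1 > 0" "g x2 < 0" "g x3 > 0" using assms(3-5) by (auto simp: g_def)
  then have "(fst l' - fst l) * (x2 - x1) < 0" using gd[of x2 x1] by linarith
  then have neg: "fst l' - fst l < 0" using assms(1) by (simp add: mult_less_0_iff)
  have "(fst l' - fst l) * (x3 - x2) \<le> 0" using neg assms(2) by (simp add: mult_le_0_iff)
  then show False using gd[of x3 x2] \<open>g x2 < 0\<close> \<open>g x3 > 0\<close> by linarith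
qed

lemma shift_finite: "finite A \<Longrightarrow> finite (shift_prod_set A a)"
proof -
  assume "finite A"
  moreover have "shift_prod_set A a = (\<lambda>p. fst p * (snd p + a)) ` (A \<times> A)"
    unfolding shift_prod_set_def by force
  ultimately show ?thesis by simp
qed

lemma lin_in: "l \<in> (A - {0}) \<times> A \<Longrightarrow> a \<in> A \<Longrightarrow> lin l a \<in> shift_prod_set A a"
  unfolding shift_prod_set_def lin_def by (cases l) (auto simp: add.commute)

lemma slab:
  fixes A :: "real set" and a a2 :: real and \<beta> S :: nat
  assumes finA: "finite A" and aA: "a \<in> A" and a2A: "a2 \<in> A" and aa2: "a < a2" and b0: "\<beta> > 0"
    and c1: "card (shift_prod_set A a) \<le> S" and c2: "card (shift_prod_set A a2) \<le> S"
  shows "real (card ((A - {0}) \<times> A))^2 \<le> real (2*(S div \<beta>)+2) *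
     (2*real (card (Xs ((A - {0}) \<times> A) a a2)) + real \<beta>^2 * real (card ((A - {0}) \<times> A)))"
proof -
  define L where "L = (A - {0}) \<times> A"
  define P1 where "P1 = shift_prod_set A a"
  define P2 where "P2 = shift_prod_set A a2"
  have fP1: "finite P1" and fP2: "finite P2" using finA by (auto simp: P1_def P2_def shift_finite)
  have fL: "finite L" using finA by (simp add: L_def)
  define u where "u l = rk P1 (lin l a) div \<beta>" for l
  define w where "w l = rk P2 (lin l a2) div \<beta>" for l
  define d where "d l = u l + w l" for l
  define Q where "Q = 2*(S div \<beta>)+2"
  have in1: "lin l a \<in> P1" if "l \<in> L" for l using lin_in[OF _ aA] that by (simp add: L_def P1_def)
  have in2: "lin l a2 \<in> P2" if "l \<in> L" for l using lin_in[OF _ a2A] that by (simp add: L_def P2_def)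
  have dQ: "\<forall>l\<in>L. d l < Q"
  proof
    fix l assume l: "l \<in> L"
    have "rk P1 (lin l a) \<le> S" using rk_lt_card[OF fP1 in1[OF l]] c1 by (simp add: P1_def)
    then have "u l \<le> S div \<beta>" unfolding u_def by (rule div_le_mono)
    moreover have "rk P2 (lin l a2) \<le> S" using rk_lt_card[OF fP2 in2[OF l]] c2 by (simp add: P2_def)
    then have "w l \<le> S div \<beta>" unfolding w_def by (rule div_le_mono)
    ultimately show "d l < Q" by (simp add: d_def Q_def)
  qed
  define E where "E = {p\<in>L\<times>L. d (fst p) = d (snd p)}"
  define E1 where "E1 = {p\<in>L\<times>L. u (fst p) = u (snd p) \<and> w (fst p) = w (snd p)}"
  define X where "X = Xs L a a2"
  have cs: "real (card L)^2 \<le> real Q * real (card E)"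
    unfolding E_def by (rule pairs_cs[OF fL dQ])
  have ulx: "p \<in> X" if "p \<in> L\<times>L" "u (fst p) < u (snd p)" "d (fst p) = d (snd p)" for p
  proof -
    have wl: "w (snd p) < w (fst p)" using that(2,3) by (simp add: d_def)
    have r1: "rk P1 (lin (fst p) a) < rk P1 (lin (snd p) a)"
      using that(2) unfolding u_def by (meson div_le_mono not_le)
    have r2: "rk P2 (lin (snd p) a2) < rk P2 (lin (fst p) a2)"
      using wl unfolding w_def by (meson div_le_mono not_le)
    show ?thesis using rk_less_imp[OF fP1 r1] rk_less_imp[OF fP2 r2] that(1)
      by (simp add: X_def Xs_def L_def)
  qed
  have Esub: "E \<subseteq> E1 \<union> X \<union> prod.swap ` X"
  proof
    fix p assume p: "p \<in> E"
    then have pL: "p \<in> L\<times>L" and dd: "d (fst p) = d (snd p)" by (auto simp: E_def)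
    consider "u (fst p) = u (snd p)" | "u (fst p) < u (snd p)" | "u (snd p) < u (fst p)" by linarith
    then show "p \<in> E1 \<union> X \<union> prod.swap ` X"
    proof cases
      case 1 then show ?thesis using pL dd by (simp add: E1_def d_def)
    next
      case 2 then show ?thesis using ulx[OF pL 2 dd] by simp
    next
      case 3
      have "prod.swap p \<in> X" using ulx[of "prod.swap p"] pL 3 dd by (cases p) auto
      then have "prod.swap (prod.swap p) \<in> prod.swap ` X" by blast
      then show ?thesis by simp
    qed
  qed
  have fX: "finite X"
    by (rule finite_subset[of _ "L\<times>L"]) (use fL in \<open>auto simp: X_def Xs_def\<close>)
  have fE1: "finite E1" using fL by (auto simp: E1_def)
  have cE: "card E \<le> card E1 + 2 * card X"
  proof -
    have "card E \<le> card (E1 \<union> X \<union> prod.swap ` X)"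
      using Esub fX fE1 by (intro card_mono) auto
    also have "\<dots> \<le> card E1 + card X + card (prod.swap ` X)"
      by (meson card_Un_le add_le_mono1 le_trans)
    also have "card (prod.swap ` X) \<le> card X" by (rule card_image_le[OF fX])
    finally show ?thesis by simp
  qed
  have cE1: "card E1 \<le> card L * \<beta>^2"
  proof -
    define F where "F l = {l'\<in>L. u l' = u l \<and> w l' = w l}" for l
    have "E1 = Sigma L F" by (auto simp: E1_def F_def)
    then have "card E1 = (\<Sum>l\<in>L. card (F l))" using fL by (simp add: F_def)
    also have "\<dots> \<le> (\<Sum>l\<in>L. \<beta>^2)"
    proof (rule sum_mono)
      fix l assume l: "l \<in> L"
      have "card (F l) \<le> card ({y\<in>P1. rk P1 y div \<beta> = u l} \<times> {y\<in>P2. rk P2 y div \<beta> = w l})"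
      proof (rule card_inj_on_le[where f="\<lambda>l'. (lin l' a, lin l' a2)"])
        show "inj_on (\<lambda>l'. (lin l' a, lin l' a2)) (F l)"
          unfolding inj_on_def
        proof (intro ballI impI)
          fix x y assume "x \<in> F l" "y \<in> F l" "(lin x a, lin x a2) = (lin y a, lin y a2)"
          then show "x = y" using lin_inj[of a a2 x y] aa2 by (auto simp: F_def L_def)
        qed
        show "(\<lambda>l'. (lin l' a, lin l' a2)) ` F l \<subseteq> {y\<in>P1. rk P1 y div \<beta> = u l} \<times> {y\<in>P2. rk P2 y div \<beta> = w l}"
          using in1 in2 by (auto simp: F_def u_def w_def)
        show "finite ({y\<in>P1. rk P1 y div \<beta> = u l} \<times> {y\<in>P2. rk P2 y div \<beta> = w l})"
          using fP1 fP2 by simp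
      qed
      also have "\<dots> \<le> \<beta> * \<beta>"
        using block_card[OF fP1 b0, of "u l"] block_card[OF fP2 b0, of "w l"]
        by (simp add: card_cartesian_product mult_le_mono)
      finally show "card (F l) \<le> \<beta>^2" by (simp add: power2_eq_square)
    qed
    finally show ?thesis by simp
  qed
  have "real (card E) \<le> 2 * real (card X) + real \<beta>^2 * real (card L)"
  proof -
    have "card E \<le> 2 * card X + \<beta>^2 * card L" using cE cE1 by (simp add: mult.commute)
    then have "real (card E) \<le> real (2 * card X + \<beta>^2 * card L)" by linarith
    then show ?thesis by simp
  qed
  then have "real Q * real (card E) \<le> real Q * (2 * real (card X) + real \<beta>^2 * real (card L))"
    by (intro mult_left_mono) auto
  with cs have "real (card L)^2 \<le> real Q * (2 * real (card X) + real \<beta>^2 * real (card L))"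
    by (rule order_trans)
  then show ?thesis unfolding L_def Q_def X_def by simp
qed

lemma global:
  fixes A Bd :: "real set" and \<beta> S :: nat
  assumes finA: "finite A" and BA: "Bd \<subseteq> A" and Bne: "Bd \<noteq> {}" and b0: "\<beta> > 0"
    and cS: "\<forall>a\<in>Bd. card (shift_prod_set A a) \<le> S"
  shows "real (card Bd - 1) * real (card ((A - {0}) \<times> A))^2 \<le> real (2*(S div \<beta>)+2) *
     (2*real (card ((A - {0}) \<times> A))^2 + real (card Bd - 1) * real \<beta>^2 * real (card ((A - {0}) \<times> A)))"
proof -
  define L where "L = (A - {0}) \<times> A"
  define Q where "Q = 2*(S div \<beta>)+2"
  define T where "T = Bd - {Max Bd}"
  define nx where "nx a = Min {x\<in>Bd. a < x}" for a
  have fB: "finite Bd" using finA BA finite_subset by blast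
  have fL: "finite L" using finA by (simp add: L_def)
  have cT: "card T = card Bd - 1" using fB Bne by (simp add: T_def Max_in)
  have fT: "finite T" using fB by (simp add: T_def)
  have nxp: "nx a \<in> Bd \<and> a < nx a \<and> (\<forall>x\<in>Bd. a < x \<longrightarrow> nx a \<le> x)" if "a \<in> T" for a
  proof -
    have "a \<le> Max Bd" "a \<noteq> Max Bd" "a \<in> Bd" using that fB by (auto simp: T_def)
    then have ne: "{x\<in>Bd. a < x} \<noteq> {}" using Max_in[OF fB Bne] by force
    have fin: "finite {x\<in>Bd. a < x}" using fB by simp
    show ?thesis using Min_in[OF fin ne] Min_le[OF fin] by (auto simp: nx_def)
  qed
  define X where "X a = Xs L a (nx a)" for a
  have fX: "finite (X a)" for a
    by (rule finite_subset[of _ "L\<times>L"]) (use fL in \<open>auto simp: X_def Xs_def\<close>)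
  have disj: "X a \<inter> X a' = {}" if "a \<in> T" "a' \<in> T" "a < a'" for a a'
  proof (rule ccontr)
    assume "X a \<inter> X a' \<noteq> {}"
    then obtain p where p: "p \<in> X a" "p \<in> X a'" by blast
    have "a' \<in> Bd" using that by (auto simp: T_def)
    then have "nx a \<le> a'" using nxp[OF that(1)] that(3) by blast
    then show False using no_two[of a "nx a" a' "fst p" "snd p"] p nxp[OF that(1)]
      by (auto simp: X_def Xs_def)
  qed
  have sumX: "(\<Sum>a\<in>T. card (X a)) \<le> card L ^ 2"
  proof -
    have "(\<Sum>a\<in>T. card (X a)) = card (\<Union>a\<in>T. X a)"
    proof (rule card_UN_disjoint[symmetric])
      show "\<forall>i\<in>T. \<forall>j\<in>T. i \<noteq> j \<longrightarrow> X i \<inter> X j = {}"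
        using disj by (metis inf_commute linorder_neqE_linordered_idom)
    qed (auto simp: fT fX)
    also have "\<dots> \<le> card (L \<times> L)"
      by (rule card_mono) (use fL in \<open>auto simp: X_def Xs_def\<close>)
    finally show ?thesis by (simp add: card_cartesian_product power2_eq_square)
  qed
  have sl: "real (card L)^2 \<le> real Q * (2*real (card (X a)) + real \<beta>^2 * real (card L))"
    if "a \<in> T" for a
  proof -
    have "a \<in> Bd" using that by (simp add: T_def)
    then show ?thesis using slab[OF finA, of a "nx a" \<beta> S] nxp[OF that] BA b0 cS
      by (auto simp: L_def Q_def X_def)
  qed
  have "real (card T) * real (card L)^2 = (\<Sum>a\<in>T. real (card L)^2)" by simp
  also have "\<dots> \<le> (\<Sum>a\<in>T. real Q * (2*real (card (X a)) + real \<beta>^2 * real (card L)))"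
    by (rule sum_mono) (rule sl)
  also have "\<dots> = real Q * (2 * real (\<Sum>a\<in>T. card (X a)) + real (card T) * real \<beta>^2 * real (card L))"
    by (simp add: sum_distrib_left sum.distrib algebra_simps)
  also have "\<dots> \<le> real Q * (2 * real (card L)^2 + real (card T) * real \<beta>^2 * real (card L))"
  proof -
    have "real (\<Sum>a\<in>T. card (X a)) \<le> real (card L)^2" using sumX
      by (metis of_nat_le_iff of_nat_power)
    then show ?thesis by (intro mult_left_mono) auto
  qed
  finally show ?thesis by (simp add: cT L_def Q_def)
qed

lemma powr32: "0 \<le> (x::real) \<Longrightarrow> x powr (3/2) = x * sqrt x"
proof -
  assume x: "0 \<le> x"
  show ?thesis
  proof (cases "x = 0")
    case False
    have e: "(3/2::real) = 1 + 1/2" by simp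
    have "x powr (1 + 1/2) = x powr 1 * x powr (1/2)" by (rule powr_add)
    then show ?thesis using False x by (simp only: e) (simp add: powr_half_sqrt)
  qed simp
qed

lemma final_arith:
  fixes N t L q :: real
  assumes "N \<ge> 200" "t > N/2 - 1" "L \<ge> N*N - N" "L \<le> N*N" "0 \<le> q" "q \<le> N/1000 + 2"
    "t * L \<le> q * (2*L + t*N)"
  shows False
proof -
  have t0: "t \<ge> 0" using assms by linarith
  have "t * (L - q*N) \<le> 2*q*L" using assms(7) by (simp add: algebra_simps)
  moreover have "L - q*N \<ge> N*N - N - (N/1000+2)*N"
    using assms(3,6,1) by (smt (verit) mult_right_mono)
  moreover have "N*N - N - (N/1000+2)*N \<ge> 0"
  proof -
    have "N * (999/1000*N - 3) \<ge> 0" using assms(1) by (intro mult_nonneg_nonneg) auto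
    then show ?thesis by (simp add: algebra_simps)
  qed
  ultimately have "(N/2 - 1) * (N*N - N - (N/1000+2)*N) \<le> 2*q*L"
    by (smt (verit, best) assms(2) mult_mono t0)
  moreover have "q*L \<le> (N/1000+2)*(N*N)"
  proof -
    have "N*(N-1) \<ge> 0" using assms(1) by (intro mult_nonneg_nonneg) auto
    then have L0: "L \<ge> 0" using assms(3) by (simp add: algebra_simps)
    show ?thesis using mult_mono[OF assms(6) assms(4)] L0 assms(1) by auto
  qed
  then have "2*q*L \<le> 2*(N/1000+2)*(N*N)" by linarith
  moreover have "N*(N*(4975/10000*N - 6499/1000) + 3) > 0"
    using assms(1) by (intro mult_pos_pos add_pos_pos) auto
  moreover have "(N/2 - 1) * (N*N - N - (N/1000+2)*N) - 2*(N/1000+2)*(N*N)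
     = N*(N*(4975/10000*N - 6499/1000) + 3)" by (simp add: field_simps)
  moreover have "\<And>x y z w::real. x \<le> y \<Longrightarrow> y \<le> z \<Longrightarrow> 0 < w \<Longrightarrow> x - z = w \<Longrightarrow> False"
    by linarith
  ultimately show False by blast
qed

theorem theorem2p9:
  shows "\<exists>C::real. C > 0 \<and>
    (\<forall>A::real set. finite A \<longrightarrow>
      (\<exists>A' \<subseteq> A. real (card A') \<ge> real (card A) / 2 \<and>
        (\<forall>a \<in> A'. real (card (shift_prod_set A a)) \<ge> C * real (card A) powr (3/2))))"
proof (intro exI[of _ "1/4000"] conjI allI impI)
  show "(0::real) < 1/4000" by simp
  fix A :: "real set" assume finA: "finite A"
  define n where "n = card A"
  show "\<exists>A'\<subseteq>A. real (card A) / 2 \<le> real (card A') \<and>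
          (\<forall>a\<in>A'. 1/4000 * real (card A) powr (3/2) \<le> real (card (shift_prod_set A a)))"
  proof (cases "n < 200")
    case True
    show ?thesis
    proof (intro exI[of _ A] conjI ballI)
      show "A \<subseteq> A" by simp
      show "real (card A) / 2 \<le> real (card A)" by simp
      fix a assume aA: "a \<in> A"
      have "a * (a + a) \<in> shift_prod_set A a" using aA unfolding shift_prod_set_def by blast
      then have "card (shift_prod_set A a) \<ge> 1"
        using shift_finite[OF finA, of a] by (metis One_nat_def Suc_leI card_gt_0_iff empty_iff)
      moreover have "real n * sqrt (real n) \<le> 200 * 15"
      proof (rule mult_mono)
        show "real n \<le> 200" using True by simp
        have "sqrt (real n) \<le> sqrt (15^2)" by (rule real_sqrt_le_mono) (use True in simp)
        then show "sqrt (real n) \<le> 15" by (simp only: real_sqrt_abs abs_numeral)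
      qed auto
      ultimately show "1/4000 * real (card A) powr (3/2) \<le> real (card (shift_prod_set A a))"
        by (simp add: powr32 n_def[symmetric])
    qed
  next
    case False
    then have n200: "real n \<ge> 200" by simp
    define K where "K = 1/4000 * real n * sqrt (real n)"
    define G where "G = {a\<in>A. K \<le> real (card (shift_prod_set A a))}"
    have KK: "1/4000 * real (card A) powr (3/2) = K" by (simp add: K_def powr32 n_def)
    have "real (card A) / 2 \<le> real (card G)"
    proof (rule ccontr)
      assume contra: "\<not> real (card A) / 2 \<le> real (card G)"
      define Bd where "Bd = A - G"
      define m where "m = card Bd"
      have GA: "G \<subseteq> A" by (auto simp: G_def)
      have "m = n - card G" using card_Diff_subset[OF finite_subset[OF GA finA] GA]
        by (simp add: m_def Bd_def n_def)
      moreover have "card G \<le> n" using card_mono[OF finA GA] by (simp add: n_def)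
      ultimately have mr: "real m = real n - real (card G)" by simp
      then have mgt: "real m > real n / 2" using contra by (simp add: n_def)
      then have Bne: "Bd \<noteq> {}" using n200 by (auto simp: m_def)
      have sqn: "sqrt (real n) \<ge> 14"
      proof -
        have "sqrt (14^2) \<le> sqrt (real n)" by (rule real_sqrt_le_mono) (use n200 in simp)
        then show ?thesis by (simp only: real_sqrt_abs abs_numeral)
      qed
      have K0: "K \<ge> 0" by (simp add: K_def)
      define S where "S = nat \<lfloor>K\<rfloor>"
      have SK: "real S \<le> K" using K0 by (simp add: S_def)
      have cS: "\<forall>a\<in>Bd. card (shift_prod_set A a) \<le> S"
      proof
        fix a assume "a \<in> Bd"
        then have "real (card (shift_prod_set A a)) < K" by (auto simp: Bd_def G_def)
        then have "int (card (shift_prod_set A a)) \<le> \<lfloor>K\<rfloor>" by linarith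
        then show "card (shift_prod_set A a) \<le> S" by (simp add: S_def)
      qed
      define \<beta> where "\<beta> = nat \<lfloor>sqrt (real n)\<rfloor>"
      have b1: "real \<beta> \<le> sqrt (real n)" "real \<beta> > sqrt (real n) - 1"
        using sqn by (auto simp: \<beta>_def)
      have b0: "\<beta> > 0" using b1 sqn by linarith
      have bsq: "real \<beta>^2 \<le> real n"
      proof -
        have "real \<beta>^2 \<le> (sqrt (real n))^2" by (rule power_mono) (use b1 in auto)
        then show ?thesis by simp
      qed
      define L where "L = card ((A - {0}) \<times> A)"
      have Lr: "real L = real (card (A - {0})) * real n"
        by (simp add: L_def card_cartesian_product n_def)
      have c0: "card (A - {0}) \<ge> n - 1" "card (A - {0}) \<le> n"
        using card_Diff1_le[of A 0] n_def finA
        by (auto simp: card_Diff_singleton_if)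
      have L1: "real L \<ge> real n * real n - real n" "real L \<le> real n * real n"
      proof -
        have "real (card (A - {0})) \<ge> real n - 1" using c0(1) by linarith
        then have "(real n - 1) * real n \<le> real (card (A - {0})) * real n"
          by (rule mult_right_mono) auto
        then show "real L \<ge> real n * real n - real n" using Lr by (simp add: algebra_simps)
        show "real L \<le> real n * real n" using Lr c0(2) n200 by (simp add: mult_right_mono)
      qed
      have Lpos: "real L > 0"
      proof -
        have "real n * (real n - 1) > 0" using n200 by (intro mult_pos_pos) auto
        then show ?thesis using L1 by (simp add: algebra_simps)
      qed
      define q where "q = real (2*(S div \<beta>)+2)"
      have qb: "q \<le> real n / 1000 + 2"
      proof -
        have "real (S div \<beta>) \<le> real S / real \<beta>" by (rule of_nat_div_le_of_nat)
        also have "\<dots> \<le> K / (sqrt (real n) / 2)"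
          using SK K0 b1 sqn n200 by (intro frac_le) auto
        also have "\<dots> = real n / 2000" using sqn by (simp add: K_def field_simps)
        finally show ?thesis by (simp add: q_def)
      qed
      define t where "t = real (m - 1)"
      have tr: "t = real m - 1" using Bne by (simp add: t_def m_def finite_subset[OF _ finA] Bd_def card_gt_0_iff Suc_leI)
      have gl: "t * real L ^ 2 \<le> q * (2 * real L ^2 + t * real \<beta>^2 * real L)"
        using global[OF finA _ Bne b0 cS] by (simp add: Bd_def t_def m_def q_def L_def)
      have "t * real L ^ 2 \<le> q * (2 * real L ^2 + t * real n * real L)"
      proof -
        have t0: "t \<ge> 0" by (simp add: t_def)
        have "t * real \<beta>^2 * real L \<le> t * real n * real L"
          using bsq t0 Lpos by (simp add: mult_mono)
        then show ?thesis using gl by (smt (verit, best) mult_left_mono of_nat_0_le_iff q_def)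
      qed
      then have "(t * real L) * real L \<le> (q * (2 * real L + t * real n)) * real L"
        by (simp add: power2_eq_square algebra_simps)
      then have "t * real L \<le> q * (2 * real L + t * real n)" using Lpos by simp
      then show False using final_arith[of "real n" t "real L" q] n200 tr mgt L1 qb
        by (simp add: q_def)
    qed
    then show ?thesis using KK by (intro exI[of _ G]) (auto simp: G_def)
  qed
qed

end
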